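(* Let $U:\mathbb{N}\to\mathbb{N}$ be any function with $U(x)\ge p_{x+1}-1$ for all integers $x\ge 0$. For integers $j\ge 2$ define \[ I(j)=\left\lfloor \frac{1}{1+\sum_{k=2}^{j-1}\left\lfloor \frac{\gcd(k,j)}{k}\right\rfloor}\right\rfloor, \] for integers $i\ge 1$ define $S(i)=\sum_{j=2}^{i} I(j)$ (so $S(1)=0$), for integers $i\ge 1$, $x\ge 0$ define \[ A(i,x)=\left\lfloor \frac{1}{1+\left\lfloor \frac{S(i)}{x+1}\right\rfloor}\right\rfloor, \] and define $f_{U}(x)=1+\sum_{i=1}^{U(x)} A(i,x)$. Then for every integer $x\ge 0$, $f_{U}(x)=p_{x+1}$.
   Context: $\mathbb{N}=\{0,1,2,\dots\}$. $p_n$ denotes the $n$-th prime ($p_1=2$, $p_2=3,\dots$). $\lfloor\cdot\rfloor$ is the floor function and $\gcd$ the usual greatest common divisor; empty sums are $0$. *)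

theory Defs
  imports Complex_Main "HOL-Computational_Algebra.Primes"
begin

(* p n : the n-th prime, 1-indexed (p 1 = 2, p 2 = 3, ...):
   the unique prime q such that exactly n primes are \<le> q. *)
definition nthp :: "nat \<Rightarrow> nat" where
  "nthp n = (THE q. prime q \<and> card {r. prime r \<and> r \<le> q} = n)"

definition I_fun :: "nat \<Rightarrow> int" where
  "I_fun j = \<lfloor>1 / (1 + (\<Sum>k=2..j-1. real_of_int \<lfloor>real (gcd k j) / real k\<rfloor>))\<rfloor>"

definition S_fun :: "nat \<Rightarrow> int" where
  "S_fun i = (\<Sum>j=2..i. I_fun j)"

definition A_fun :: "nat \<Rightarrow> nat \<Rightarrow> int" where
  "A_fun i x = \<lfloor>1 / (1 + real_of_int \<lfloor>real_of_int (S_fun i) / real (x + 1)\<rfloor>)\<rfloor>"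

definition f_U :: "(nat \<Rightarrow> nat) \<Rightarrow> nat \<Rightarrow> int" where
  "f_U U x = 1 + (\<Sum>i=1..U x. A_fun i x)"

end

theory Submission
  imports Defs
begin

definition pic :: "nat \<Rightarrow> nat" where
  "pic i = card {r. prime r \<and> r \<le> i}"

lemma fin_pr: "finite {r::nat. prime r \<and> r \<le> i}" by auto

lemma pic_Suc: "pic (Suc i) = pic i + (if prime (Suc i) then 1 else 0)"
proof -
  have "{r. prime r \<and> r \<le> Suc i} = (if prime (Suc i) then insert (Suc i) {r. prime r \<and> r \<le> i} else {r. prime r \<and> r \<le> i})"
    using le_Suc_eq by auto
  then show ?thesis unfolding pic_def using fin_pr[of i] by auto
qed

lemma pic_mono: "i \<le> j \<Longrightarrow> pic i \<le> pic j"
  unfolding pic_def by (rule card_mono[OF fin_pr]) auto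

lemma pic_strict: assumes "prime (q::nat)" "i < q" shows "pic i < pic q"
proof -
  have "{r. prime r \<and> r \<le> i} \<subseteq> {r. prime r \<and> r \<le> q}" using assms by auto
  moreover have "q \<in> {r. prime r \<and> r \<le> q}" "q \<notin> {r. prime r \<and> r \<le> i}" using assms by auto
  ultimately have "{r. prime r \<and> r \<le> i} \<subset> {r. prime r \<and> r \<le> q}" by blast
  then show ?thesis unfolding pic_def by (rule psubset_card_mono[OF fin_pr])
qed

lemma pic_unbounded: "\<exists>m. pic m \<ge> n"
proof (induction n)
  case 0 then show ?case by auto
next
  case (Suc n)
  then obtain m where "pic m \<ge> n" by auto
  obtain p where "prime p" "m < p" using bigger_prime[of m] by auto
  then have "pic p > pic m" using pic_strict by auto
  then show ?case using \<open>pic m \<ge> n\<close> by (intro exI[of _ p]) auto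
qed

lemma pic_0: "pic 0 = 0" unfolding pic_def by auto

lemma pic_exists: assumes "n \<ge> 1" shows "\<exists>q. prime q \<and> pic q = n"
proof -
  define m where "m = (LEAST m. pic m \<ge> n)"
  have m1: "pic m \<ge> n" unfolding m_def using pic_unbounded LeastI_ex by metis
  have m0: "m \<noteq> 0"
  proof
    assume "m = 0" then have "n \<le> 0" using m1 pic_0 by simp
    then show False using assms by simp
  qed
  then obtain k where k: "m = Suc k" using not0_implies_Suc by auto
  have "\<not> pic k \<ge> n" using not_less_Least[of k "\<lambda>m. pic m \<ge> n"] k m_def by auto
  then have "pic m = n \<and> prime m" using m1 pic_Suc[of k] k by (auto split: if_splits)
  then show ?thesis by auto
qed

lemma nthp_prop: assumes "n \<ge> 1" shows "prime (nthp n) \<and> pic (nthp n) = n"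
proof -
  obtain q where q: "prime q" "pic q = n" using pic_exists assms by auto
  have "nthp n = q" unfolding nthp_def
  proof (rule the_equality)
    show "prime q \<and> card {r. prime r \<and> r \<le> q} = n" using q unfolding pic_def by auto
  next
    fix q' :: nat assume h: "prime q' \<and> card {r. prime r \<and> r \<le> q'} = n"
    then have "pic q' = n" unfolding pic_def by auto
    then show "q' = q" using h q pic_strict by (metis less_irrefl linorder_neqE_nat)
  qed
  then show ?thesis using q by auto
qed

lemma term_eq: assumes "k \<ge> (1::nat)"
  shows "real_of_int \<lfloor>real (gcd k j) / real k\<rfloor> = (if k dvd j then 1 else 0)"
proof (cases "k dvd j")
  case True
  then have "gcd k j = k" by (simp add: gcd_nat.absorb1)
  then show ?thesis using True assms by auto
next
  case False
  have "gcd k j \<le> k" using assms by (simp add: gcd_le1_nat)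
  moreover have "gcd k j \<noteq> k" using False by (metis gcd_dvd2)
  ultimately have "gcd k j < k" by auto
  then have "real (gcd k j) / real k < 1" "real (gcd k j) / real k \<ge> 0" using assms by auto
  then have "\<lfloor>real (gcd k j) / real k\<rfloor> = 0" by (simp add: floor_eq_iff)
  then show ?thesis using False by simp
qed

lemma I_eq: assumes "j \<ge> 2" shows "I_fun j = (if prime j then 1 else 0)"
proof -
  define s where "s = (\<Sum>k=2..j-1. real_of_int \<lfloor>real (gcd k j) / real k\<rfloor>)"
  have s_eq: "s = (\<Sum>k=2..j-1. (if k dvd j then 1 else 0 :: real))"
    unfolding s_def by (rule sum.cong) (auto simp: term_eq)
  show ?thesis
  proof (cases "prime j")
    case True
    have "s = 0" unfolding s_eq
    proof (rule sum.neutral, intro ballI)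
      fix k assume "k \<in> {2..j-1}"
      then have kr: "2 \<le> k" "k < j" using assms by auto
      have "\<not> k dvd j"
      proof
        assume "k dvd j"
        then have "k = 1 \<or> k = j" using True prime_nat_iff by blast
        then show False using kr by auto
      qed
      then show "(if k dvd j then 1 else 0 :: real) = 0" by simp
    qed
    then show ?thesis using True unfolding I_fun_def s_def[symmetric] by simp
  next
    case False
    then obtain k where k: "k dvd j" "k \<noteq> 1" "k \<noteq> j" using assms prime_nat_iff by auto
    have "k \<le> j" using k assms by (simp add: dvd_imp_le)
    have "k \<noteq> 0" using k assms by auto
    then have kin: "k \<in> {2..j-1}" using k \<open>k \<le> j\<close> by auto
    have "(\<Sum>k\<in>{k}. (if k dvd j then 1 else 0 :: real)) \<le> s" unfolding s_eq
      by (rule sum_mono2) (use kin in auto)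
    then have "s \<ge> 1" using k by simp
    then have "1 / (1 + s) < 1" "1 / (1+s) \<ge> 0" by auto
    then have "\<lfloor>1 / (1 + s)\<rfloor> = 0" by (simp add: floor_eq_iff)
    then show ?thesis using False unfolding I_fun_def s_def[symmetric] by simp
  qed
qed

lemma S_eq: "S_fun i = int (pic i)"
proof (induction i)
  case 0 then show ?case by (simp add: S_fun_def pic_0)
next
  case (Suc i)
  show ?case
  proof (cases "i = 0")
    case True
    have "pic 1 = 0" using pic_Suc[of 0] pic_0 by simp
    then show ?thesis using True by (simp add: S_fun_def)
  next
    case False
    have "S_fun (Suc i) = S_fun i + I_fun (Suc i)"
      unfolding S_fun_def using False by (simp add: sum.cl_ivl_Suc)
    then show ?thesis using Suc I_eq[of "Suc i"] False pic_Suc[of i] by auto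
  qed
qed

lemma A_eq: "A_fun i x = (if pic i \<le> x then 1 else 0)"
proof -
  have "\<lfloor>real_of_int (S_fun i) / real (x + 1)\<rfloor> = int (pic i div (x+1))"
    unfolding S_eq by (metis floor_divide_of_nat_eq of_int_of_nat_eq of_nat_1 of_nat_add)
  moreover have "(pic i div (x+1) = 0) = (pic i \<le> x)" by (simp add: div_eq_0_iff less_Suc_eq_le)
  moreover have "d \<ge> 1 \<Longrightarrow> \<lfloor>1 / (1 + real d)\<rfloor> = 0" for d :: nat
  proof -
    assume "d \<ge> 1"
    then have "1 / (1 + real d) < 1" "1 / (1 + real d) \<ge> 0" by auto
    then show ?thesis by (simp add: floor_eq_iff)
  qed
  ultimately show ?thesis unfolding A_fun_def
    by (cases "pic i div (x+1) = 0") auto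
qed

theorem mainTheorem1:
  fixes U :: "nat \<Rightarrow> nat"
  assumes "\<And>x. U x \<ge> nthp (x + 1) - 1"
  shows "\<forall>x. f_U U x = int (nthp (x + 1))"
proof
  fix x
  define q where "q = nthp (x+1)"
  have q: "prime q" "pic q = x + 1" using nthp_prop[of "x+1"] q_def by auto
  have iff: "pic i \<le> x \<longleftrightarrow> i < q" for i
  proof
    assume "pic i \<le> x"
    show "i < q"
    proof (rule ccontr)
      assume "\<not> i < q" then have "pic q \<le> pic i" by (simp add: pic_mono)
      then show False using q \<open>pic i \<le> x\<close> by simp
    qed
  next
    assume "i < q" then have "pic i < pic q" using pic_strict[OF q(1)] by blast
    then show "pic i \<le> x" using q(2) by simp
  qed
  have q2: "q \<ge> 2" using q prime_ge_2_nat by auto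
  have "(\<Sum>i=1..U x. A_fun i x) = (\<Sum>i\<in>{1..U x}. (if i < q then 1 else 0))"
    by (rule sum.cong) (auto simp: A_eq iff)
  also have "\<dots> = int (card ({1..U x} \<inter> {i. i < q}))"
    by (simp add: sum.If_cases)
  also have "{1..U x} \<inter> {i. i < q} = {1..q-1}" using assms[of x] q_def q2 by auto
  finally show "f_U U x = int (nthp (x + 1))" unfolding f_U_def q_def[symmetric] using q2 by simp
qed

end
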